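(* Let $\xi\in\mathbb{R}\setminus\{0\}$ and for $\psi\in H_0^2((-1,1))$ let $E_0(\psi)=\frac12\int_{-1}^1|B|^2\big(|\psi'|^2+\frac{|\psi''|^2}{\xi^2}\big)dx_2-\frac12g[\rho]\psi(0)^2$. Then: (i) if $|B|\ge|B|_c$, then $E_0(\psi)\ge0$ for every $\psi\in H_0^2((-1,1))$, and moreover $E_0(\psi)\ge\frac12\int_{-1}^1\big((|B|^2-|B|_c^2)|\psi'|^2+\frac{|B|^2|\psi''|^2}{\xi^2}\big)dx_2$; (ii) if $|B|<|B|_c$ and $|\xi|\le|\xi|^B_{vc}$, then $E_0(\psi)\ge0$ for every $\psi\in H_0^2((-1,1))$; (iii) if $|B|<|B|_c$ and $|\xi|>|\xi|^B_{vc}$, then there exists $\psi\in H_0^2((-1,1))$ with $E_0(\psi)<0$; (iv) if there is $\psi\in H_0^2((-1,1))$ with $E_0(\psi)<0$, then $|B|<|B|_c$, $|\xi|>|\xi|^B_{vc}$ and $\psi(0)\ne0$.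
   Context: $g>0$, $[\rho]>0$, $B\ne0$ constants. $|B|_c^2:=\sup\{g[\rho]\psi(0)^2/\int_{-1}^1|\psi'|^2dx_2: 0\ne\psi\in H_0^1((-1,1))\}$; for $|B|<|B|_c$, $(|\xi|^B_{vc})^2:=\inf\{|B|^2\int_{-1}^1|\psi''|^2dx_2/(g[\rho]\psi(0)^2-|B|^2\int_{-1}^1|\psi'|^2dx_2):\psi\in H_0^2((-1,1)),\ g[\rho]\psi(0)^2-|B|^2\int_{-1}^1|\psi'|^2dx_2>0\}$. *)

theory Defs
  imports "HOL-Analysis.Analysis"
begin

text \<open>One-dimensional Sobolev space H_0^1((-1,1)), via the (continuous) absolutely
continuous representative: \<open>h01 \<psi> d\<close> says that \<psi> (restricted to [-1,1]) lies in
H_0^1((-1,1)) with (weak) derivative \<open>d \<in> L^2((-1,1))\<close>, i.e.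
\<psi>(x) = \<integral>_{-1}^x d for x in [-1,1] (so \<psi>(-1) = 0) and \<psi>(1) = 0.\<close>
definition h01 :: "(real \<Rightarrow> real) \<Rightarrow> (real \<Rightarrow> real) \<Rightarrow> bool" where
  "h01 \<psi> d \<longleftrightarrow>
     set_integrable lborel {-1..1} d \<and>
     set_integrable lborel {-1..1} (\<lambda>x. (d x)\<^sup>2) \<and>
     (\<forall>x\<in>{-1..1}. \<psi> x = (LINT t:{-1..x}|lborel. d t)) \<and>
     \<psi> 1 = 0"

definition h02 :: "(real \<Rightarrow> real) \<Rightarrow> (real \<Rightarrow> real) \<Rightarrow> (real \<Rightarrow> real) \<Rightarrow> bool" where
  "h02 \<psi> d1 d2 \<longleftrightarrow> h01 \<psi> d1 \<and> h01 d1 d2"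

text \<open>A function is the zero element of the space iff it vanishes on [-1,1].\<close>
definition nonzero_on :: "(real \<Rightarrow> real) \<Rightarrow> bool" where
  "nonzero_on \<psi> \<longleftrightarrow> (\<exists>x\<in>{-1..1}. \<psi> x \<noteq> 0)"

text \<open>|B|_c (grav = g, rho = [\<rho>]).\<close>
definition Bc :: "real \<Rightarrow> real \<Rightarrow> real" where
  "Bc grav rho = sqrt (Sup {grav * rho * (\<psi> 0)\<^sup>2 / (LINT x:{-1..1}|lborel. (d x)\<^sup>2) | \<psi> d.
        h01 \<psi> d \<and> nonzero_on \<psi>})"

definition xi_vc :: "real \<Rightarrow> real \<Rightarrow> real \<Rightarrow> real" where
  "xi_vc grav rho Bn = sqrt (Inf
     {Bn\<^sup>2 * (LINT x:{-1..1}|lborel. (d2 x)\<^sup>2) /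
        (grav * rho * (\<psi> 0)\<^sup>2 - Bn\<^sup>2 * (LINT x:{-1..1}|lborel. (d1 x)\<^sup>2)) | \<psi> d1 d2.
        h02 \<psi> d1 d2 \<and> grav * rho * (\<psi> 0)\<^sup>2 - Bn\<^sup>2 * (LINT x:{-1..1}|lborel. (d1 x)\<^sup>2) > 0})"

text \<open>The energy E_0(\<psi>), with \<psi>' = d1 and \<psi>'' = d2.\<close>
definition E0 :: "real \<Rightarrow> real \<Rightarrow> real \<Rightarrow> real \<Rightarrow> (real \<Rightarrow> real) \<Rightarrow> (real \<Rightarrow> real) \<Rightarrow> (real \<Rightarrow> real) \<Rightarrow> real" where
  "E0 grav rho Bn \<xi> \<psi> d1 d2 =
     1/2 * (LINT x:{-1..1}|lborel. Bn\<^sup>2 * ((d1 x)\<^sup>2 + (d2 x)\<^sup>2 / \<xi>\<^sup>2))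
     - 1/2 * grav * rho * (\<psi> 0)\<^sup>2"

end

theory Submission imports Defs begin

lemma cs_set:
  fixes d :: "real \<Rightarrow> real"
  assumes A: "A \<in> sets lborel" "emeasure lborel A \<noteq> \<infinity>" "measure lborel A = 1"
    and i1: "set_integrable lborel A d" and i2: "set_integrable lborel A (\<lambda>x. (d x)\<^sup>2)"
  shows "(LINT x:A|lborel. d x)\<^sup>2 \<le> (LINT x:A|lborel. (d x)\<^sup>2)"
proof -
  define c where "c = (LINT x:A|lborel. d x)"
  have ic: "set_integrable lborel A (\<lambda>x. c\<^sup>2)"
    unfolding set_integrable_def using A
    by (metis has_bochner_integral_indicator integrable.intros infinity_ennreal_def less_top)
  have i3: "set_integrable lborel A (\<lambda>x. 2 * c * d x)" using i1 by auto
  have "0 \<le> (LINT x:A|lborel. (d x - c)\<^sup>2)"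
    unfolding set_lebesgue_integral_def by (rule Bochner_Integration.integral_nonneg) (auto simp: indicator_def)
  also have "(\<lambda>x. (d x - c)\<^sup>2) = (\<lambda>x. ((d x)\<^sup>2 - 2 * c * d x) + c\<^sup>2)"
    by (auto simp: power2_eq_square algebra_simps)
  also have "(LINT x:A|lborel. ((d x)\<^sup>2 - 2 * c * d x) + c\<^sup>2)
      = (LINT x:A|lborel. (d x)\<^sup>2) - 2 * c * c + c\<^sup>2"
    using set_integral_add(2)[OF set_integral_diff(1)[OF i2 i3] ic]
      set_integral_diff(2)[OF i2 i3] set_integral_const[OF A(1,2), of "c\<^sup>2"] A(3)
    by (simp add: c_def)
  finally show ?thesis by (simp add: c_def power2_eq_square)
qed

lemma h01_bound:
  assumes "h01 \<psi> d"
  shows "2 * (\<psi> 0)\<^sup>2 \<le> (LINT x:{-1..1}|lborel. (d x)\<^sup>2)"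
proof -
  have i1: "set_integrable lborel {-1..1} d" and i2: "set_integrable lborel {-1..1} (\<lambda>x. (d x)\<^sup>2)"
    and p: "\<And>x. x\<in>{-1..1} \<Longrightarrow> \<psi> x = (LINT t:{-1..x}|lborel. d t)" and p1: "\<psi> 1 = 0"
    using assms unfolding h01_def by auto
  have U: "{-1..1::real} = {-1..0} \<union> {0<..1}" by auto
  have D: "{-1..0::real} \<inter> {0<..1} = {}" by auto
  have a1: "set_integrable lborel {-1..0} d" "set_integrable lborel {-1..0} (\<lambda>x. (d x)\<^sup>2)"
    using i1 i2 by (auto intro: set_integrable_subset)
  have a2: "set_integrable lborel {0<..1} d" "set_integrable lborel {0<..1} (\<lambda>x. (d x)\<^sup>2)"
    using i1 i2 by (auto intro: set_integrable_subset)
  have e1: "\<psi> 0 = (LINT t:{-1..0}|lborel. d t)" using p by auto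
  have "0 = (LINT t:{-1..1}|lborel. d t)" using p[of 1] p1 by auto
  also have "\<dots> = (LINT t:{-1..0}|lborel. d t) + (LINT t:{0<..1}|lborel. d t)"
    unfolding U by (rule set_integral_Un[OF D a1(1) a2(1)])
  finally have e2: "(LINT t:{0<..1}|lborel. d t) = - \<psi> 0" using e1 by simp
  have c1: "(\<psi> 0)\<^sup>2 \<le> (LINT t:{-1..0}|lborel. (d t)\<^sup>2)"
    using cs_set[OF _ _ _ a1] e1 by (simp add: emeasure_lborel_Icc_eq)
  have c2: "(\<psi> 0)\<^sup>2 \<le> (LINT t:{0<..1}|lborel. (d t)\<^sup>2)"
    using cs_set[OF _ _ _ a2] e2 by simp
  have "(LINT x:{-1..1}|lborel. (d x)\<^sup>2) = (LINT t:{-1..0}|lborel. (d t)\<^sup>2) + (LINT t:{0<..1}|lborel. (d t)\<^sup>2)"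
    unfolding U by (rule set_integral_Un[OF D a1(2) a2(2)])
  with c1 c2 show ?thesis by simp
qed


lemma ftc_lint:
  fixes f F :: "real \<Rightarrow> real"
  assumes "a \<le> b" "\<And>x. (F has_real_derivative f x) (at x)" "continuous_on UNIV f"
  shows "set_integrable lborel {a..b} f" "(LINT x:{a..b}|lborel. f x) = F b - F a"
proof -
  show "set_integrable lborel {a..b} f"
    by (rule borel_integrable_atLeastAtMost') (rule continuous_on_subset[OF assms(3)], auto)
  show "(LINT x:{a..b}|lborel. f x) = F b - F a"
    unfolding set_lebesgue_integral_def
    apply (rule integral_FTC_atLeastAtMost[OF assms(1)])
    using assms(2,3)
    by (auto simp: has_real_derivative_iff_has_vector_derivative[symmetric]
        intro: has_field_derivative_at_within continuous_on_subset)
qed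

definition fd1 :: "real \<Rightarrow> real \<Rightarrow> real" where
  "fd1 k x = sinh (k*x) / cosh k - sinh (k*x) / cosh (k*x)"
definition fd2 :: "real \<Rightarrow> real \<Rightarrow> real" where
  "fd2 k x = k * cosh (k*x) / cosh k - k / (cosh (k*x))\<^sup>2"
definition fPhi :: "real \<Rightarrow> real \<Rightarrow> real" where
  "fPhi k x = cosh (k*x) / (k * cosh k) - ln (cosh (k*x)) / k"
definition fpsi :: "real \<Rightarrow> real \<Rightarrow> real" where
  "fpsi k x = fPhi k x - fPhi k (-1)"

lemma cont_fd1: "continuous_on UNIV (fd1 k)"
  unfolding fd1_def by (intro continuous_intros) auto
lemma cont_fd2: "continuous_on UNIV (fd2 k)"
  unfolding fd2_def by (intro continuous_intros) auto
lemma cont_fd1sq: "continuous_on UNIV (\<lambda>x. (fd1 k x)\<^sup>2)"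
  unfolding fd1_def by (intro continuous_intros) auto
lemma cont_fd2sq: "continuous_on UNIV (\<lambda>x. (fd2 k x)\<^sup>2)"
  unfolding fd2_def by (intro continuous_intros) auto

lemma deriv_fd1: "(fd1 k has_real_derivative fd2 k x) (at x)"
proof -
  have "((\<lambda>x. sinh (k*x) / cosh k - sinh (k*x) / cosh (k*x)) has_real_derivative
     (cosh (k*x) * k / cosh k - (cosh (k*x) * k * cosh (k*x) - sinh (k*x) * (sinh (k*x) * k)) / (cosh (k*x) * cosh (k*x)))) (at x)"
    by (auto intro!: derivative_eq_intros)
  moreover have "(cosh (k*x) * k / cosh k - (cosh (k*x) * k * cosh (k*x) - sinh (k*x) * (sinh (k*x) * k)) / (cosh (k*x) * cosh (k*x))) = fd2 k x"
    using cosh_square_eq[of "k*x"] unfolding fd2_def by (simp add: power2_eq_square field_simps)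
  ultimately show ?thesis unfolding fd1_def[abs_def] by simp
qed

lemma deriv_fPhi: assumes "k \<noteq> 0" shows "(fPhi k has_real_derivative fd1 k x) (at x)"
proof -
  have "((\<lambda>x. cosh (k*x) / (k * cosh k) - ln (cosh (k*x)) / k) has_real_derivative
     (sinh (k*x) * k / (k * cosh k) - (sinh (k*x) * k / cosh (k*x)) / k)) (at x)"
    by (auto intro!: derivative_eq_intros)
  moreover have "(sinh (k*x) * k / (k * cosh k) - (sinh (k*x) * k / cosh (k*x)) / k) = fd1 k x"
    using assms unfolding fd1_def by (simp add: field_simps)
  ultimately show ?thesis unfolding fPhi_def[abs_def] by simp
qed

lemma fd1_bound: assumes "k > 0" "\<bar>x\<bar> \<le> 1" shows "(fd1 k x)\<^sup>2 \<le> 1"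
proof -
  let ?s = "sinh (k*x)" and ?c = "cosh (k*x)" and ?C = "cosh k"
  have cC: "?c \<le> ?C"
    using cosh_real_nonneg_le_iff[of "\<bar>k*x\<bar>" k] assms
    by (simp add: abs_mult mult_le_cancel_left1 del: cosh_real_abs) (metis abs_mult abs_of_pos cosh_real_abs)
  have c1: "1 \<le> ?c" by (rule cosh_real_ge_1)
  have sc: "?s\<^sup>2 \<le> ?c\<^sup>2" using cosh_square_eq[of "k*x"] by simp
  have eq: "fd1 k x = ?s * (?c - ?C) / (?c * ?C)" unfolding fd1_def by (simp add: field_simps)
  have "(fd1 k x)\<^sup>2 = (?s\<^sup>2 / ?c\<^sup>2) * ((?C - ?c)\<^sup>2 / ?C\<^sup>2)"
    unfolding eq by (simp add: power_mult_distrib power_divide power2_commute[of "?c"])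
  also have "\<dots> \<le> 1 * 1"
  proof (intro mult_mono)
    show "?s\<^sup>2 / ?c\<^sup>2 \<le> 1" using sc by (simp add: divide_le_eq_1)
    have "(?C - ?c)\<^sup>2 \<le> ?C\<^sup>2" using cC c1 by (intro power_mono) auto
    then show "(?C - ?c)\<^sup>2 / ?C\<^sup>2 \<le> 1" by (simp add: divide_le_eq_1)
  qed auto
  finally show ?thesis by simp
qed

lemma fpsi0: assumes "k > 0" shows "fpsi k 0 \<ge> 1 - 2 / k"
proof -
  have e: "fpsi k 0 = 1/(k * cosh k) - 1/k + ln (cosh k) / k"
    using assms unfolding fpsi_def fPhi_def by (simp add: field_simps)
  have "exp k / 2 \<le> cosh k" unfolding cosh_def by (simp add: field_simps)
  hence "ln (exp k / 2) \<le> ln (cosh k)" by (subst ln_le_cancel_iff) auto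
  hence l: "k - ln 2 \<le> ln (cosh k)" by (simp add: ln_div)
  have "ln 2 \<le> (1::real)" using ln_le_minus_one[of 2] by simp
  have "k - 2 \<le> ln (cosh k) - 1" using l \<open>ln 2 \<le> 1\<close> by linarith
  hence "(k - 2) / k \<le> (ln (cosh k) - 1) / k" using assms by (intro divide_right_mono) auto
  hence "1 - 2/k \<le> ln (cosh k) / k - 1/k"
    using assms by (simp add: diff_divide_distrib)
  moreover have "0 \<le> 1/(k * cosh k)" using assms by simp
  ultimately show ?thesis using e by linarith
qed


lemma h02_family: assumes "k > 0" shows "h02 (fpsi k) (fd1 k) (fd2 k)"
proof -
  have "h01 (fpsi k) (fd1 k)"
    unfolding h01_def
  proof (intro conjI ballI)
    show "set_integrable lborel {-1..1} (fd1 k)"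
      by (rule borel_integrable_atLeastAtMost') (rule continuous_on_subset[OF cont_fd1], auto)
    show "set_integrable lborel {-1..1} (\<lambda>x. (fd1 k x)\<^sup>2)"
      by (rule borel_integrable_atLeastAtMost') (rule continuous_on_subset[OF cont_fd1sq], auto)
    fix x :: real assume "x \<in> {-1..1}"
    then show "fpsi k x = (LINT t:{-1..x}|lborel. fd1 k t)"
      using ftc_lint(2)[of "-1" x "fPhi k" "fd1 k", OF _ deriv_fPhi cont_fd1] assms
      unfolding fpsi_def by auto
  next
    show "fpsi k 1 = 0" unfolding fpsi_def fPhi_def by simp
  qed
  moreover have "h01 (fd1 k) (fd2 k)"
    unfolding h01_def
  proof (intro conjI ballI)
    show "set_integrable lborel {-1..1} (fd2 k)"
      by (rule borel_integrable_atLeastAtMost') (rule continuous_on_subset[OF cont_fd2], auto)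
    show "set_integrable lborel {-1..1} (\<lambda>x. (fd2 k x)\<^sup>2)"
      by (rule borel_integrable_atLeastAtMost') (rule continuous_on_subset[OF cont_fd2sq], auto)
    fix x :: real assume "x \<in> {-1..1}"
    then show "fd1 k x = (LINT t:{-1..x}|lborel. fd2 k t)"
      using ftc_lint(2)[of "-1" x "fd1 k" "fd2 k", OF _ deriv_fd1 cont_fd2]
      by (auto simp: fd1_def)
  next
    show "fd1 k 1 = 0" unfolding fd1_def by simp
  qed
  ultimately show ?thesis unfolding h02_def by simp
qed

lemma I1_bound: assumes "k > 0" shows "(LINT x:{-1..1}|lborel. (fd1 k x)\<^sup>2) \<le> 2"
proof -
  have i1: "set_integrable lborel {-1..1} (\<lambda>x. (fd1 k x)\<^sup>2)"
      by (rule borel_integrable_atLeastAtMost') (rule continuous_on_subset[OF cont_fd1sq], auto)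
  have i2: "set_integrable lborel {-1..1::real} (\<lambda>x. (1::real))"
      by (rule borel_integrable_atLeastAtMost') auto
  have "(LINT x:{-1..1}|lborel. (fd1 k x)\<^sup>2) \<le> (LINT x:{-1..1::real}|lborel. (1::real))"
    using set_integral_mono[OF i1 i2] fd1_bound[OF assms] by force
  also have "\<dots> = 2" by (subst set_integral_const) (auto simp: emeasure_lborel_Icc_eq)
  finally show ?thesis .
qed

lemma sq_int_nonneg: "0 \<le> (LINT x:A|lborel. ((d x)::real)\<^sup>2)"
  unfolding set_lebesgue_integral_def
  by (rule Bochner_Integration.integral_nonneg) (auto simp: indicator_def)

lemma family:
  fixes q :: real assumes "q < 1/2"
  shows "\<exists>\<psi> d1 d2. h02 \<psi> d1 d2 \<and> \<psi> 0 \<noteq> 0 \<and> q * (LINT x:{-1..1}|lborel. (d1 x)\<^sup>2) < (\<psi> 0)\<^sup>2"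
proof -
  define m where "m = max q 0"
  define s where "s = sqrt (2 * m)"
  have m0: "0 \<le> m" "m < 1/2" using assms by (auto simp: m_def)
  have s0: "0 \<le> s" "s < 1" using m0 by (auto simp: s_def real_sqrt_lt_1_iff)
  have ss: "s\<^sup>2 = 2 * m" using m0 by (simp add: s_def)
  define k where "k = 2 / (1 - s) + 1"
  have k0: "k > 0" using s0 by (simp add: k_def add_pos_nonneg)
  have "2 / (1 - s) < k" by (simp add: k_def)
  hence "2 < k * (1 - s)" using s0 by (simp add: field_simps)
  hence "2 / k < 1 - s" using k0 by (simp add: field_simps)
  hence ps: "s < fpsi k 0" using fpsi0[OF k0] by linarith
  let ?I = "LINT x:{-1..1}|lborel. (fd1 k x)\<^sup>2"
  have I: "0 \<le> ?I" "?I \<le> 2" using I1_bound[OF k0] sq_int_nonneg by auto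
  have "q * ?I \<le> m * ?I" using I by (intro mult_right_mono) (auto simp: m_def)
  also have "\<dots> \<le> m * 2" using I m0 by (intro mult_left_mono) auto
  also have "\<dots> = s\<^sup>2" using ss by simp
  also have "\<dots> < (fpsi k 0)\<^sup>2" using ps s0 by (intro power_strict_mono) auto
  finally have "q * ?I < (fpsi k 0)\<^sup>2" .
  moreover have "fpsi k 0 \<noteq> 0" using ps s0 by auto
  ultimately show ?thesis using h02_family[OF k0] by blast
qed


lemma E0_eq:
  assumes "h02 \<psi> d1 d2"
  shows "E0 g r b \<xi> \<psi> d1 d2 = 1/2 * (b\<^sup>2 * (LINT x:{-1..1}|lborel. (d1 x)\<^sup>2)
     + b\<^sup>2 * (LINT x:{-1..1}|lborel. (d2 x)\<^sup>2) / \<xi>\<^sup>2) - 1/2 * g * r * (\<psi> 0)\<^sup>2"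
proof -
  have i1: "set_integrable lborel {-1..1::real} (\<lambda>x. (d1 x)\<^sup>2)"
    and i2: "set_integrable lborel {-1..1::real} (\<lambda>x. (d2 x)\<^sup>2)"
    using assms unfolding h02_def h01_def by auto
  have i3: "set_integrable lborel {-1..1::real} (\<lambda>x. (d2 x)\<^sup>2 / \<xi>\<^sup>2)" using i2 by auto
  have "(LINT x:{-1..1}|lborel. b\<^sup>2 * ((d1 x)\<^sup>2 + (d2 x)\<^sup>2 / \<xi>\<^sup>2))
      = b\<^sup>2 * ((LINT x:{-1..1}|lborel. (d1 x)\<^sup>2) + (LINT x:{-1..1}|lborel. (d2 x)\<^sup>2) / \<xi>\<^sup>2)"
    using set_integral_add(2)[OF i1 i3] by simp
  then show ?thesis unfolding E0_def by (simp add: algebra_simps)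
qed

lemma rhs_eq:
  assumes "h02 \<psi> d1 d2"
  shows "(LINT x:{-1..1}|lborel. c * (d1 x)\<^sup>2 + b\<^sup>2 * (d2 x)\<^sup>2 / \<xi>\<^sup>2)
     = c * (LINT x:{-1..1}|lborel. (d1 x)\<^sup>2) + b\<^sup>2 * (LINT x:{-1..1}|lborel. (d2 x)\<^sup>2) / \<xi>\<^sup>2"
proof -
  have i1: "set_integrable lborel {-1..1::real} (\<lambda>x. (d1 x)\<^sup>2)"
    and i2: "set_integrable lborel {-1..1::real} (\<lambda>x. (d2 x)\<^sup>2)"
    using assms unfolding h02_def h01_def by auto
  have i3: "set_integrable lborel {-1..1::real} (\<lambda>x. b\<^sup>2 * (d2 x)\<^sup>2 / \<xi>\<^sup>2)" using i2 by auto
  have i4: "set_integrable lborel {-1..1::real} (\<lambda>x. c * (d1 x)\<^sup>2)" using i1 by auto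
  show ?thesis using set_integral_add(2)[OF i4 i3] by simp
qed


theorem lemma3p3:
  fixes grav rho \<xi> :: real and B :: "'a::real_normed_vector"
  assumes "grav > 0" and "rho > 0" and "B \<noteq> 0" and "\<xi> \<noteq> 0"
  shows
    "(norm B \<ge> Bc grav rho \<longrightarrow>
        (\<forall>\<psi> d1 d2. h02 \<psi> d1 d2 \<longrightarrow>
           E0 grav rho (norm B) \<xi> \<psi> d1 d2 \<ge> 0 \<and>
           E0 grav rho (norm B) \<xi> \<psi> d1 d2 \<ge>
             1/2 * (LINT x:{-1..1}|lborel.
               ((norm B)\<^sup>2 - (Bc grav rho)\<^sup>2) * (d1 x)\<^sup>2 + (norm B)\<^sup>2 * (d2 x)\<^sup>2 / \<xi>\<^sup>2)))
   \<and> (norm B < Bc grav rho \<and> \<bar>\<xi>\<bar> \<le> xi_vc grav rho (norm B) \<longrightarrow>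
        (\<forall>\<psi> d1 d2. h02 \<psi> d1 d2 \<longrightarrow> E0 grav rho (norm B) \<xi> \<psi> d1 d2 \<ge> 0))
   \<and> (norm B < Bc grav rho \<and> \<bar>\<xi>\<bar> > xi_vc grav rho (norm B) \<longrightarrow>
        (\<exists>\<psi> d1 d2. h02 \<psi> d1 d2 \<and> E0 grav rho (norm B) \<xi> \<psi> d1 d2 < 0))
   \<and> (\<forall>\<psi> d1 d2. h02 \<psi> d1 d2 \<and> E0 grav rho (norm B) \<xi> \<psi> d1 d2 < 0 \<longrightarrow>
        norm B < Bc grav rho \<and> \<bar>\<xi>\<bar> > xi_vc grav rho (norm B) \<and> \<psi> 0 \<noteq> 0)"
proof -
  define b where "b = norm B"
  have b0: "b > 0" using assms(3) by (simp add: b_def)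
  define gr where "gr = grav * rho"
  have gr0: "gr > 0" using assms(1,2) by (simp add: gr_def)
  have xi2: "\<xi>\<^sup>2 > 0" using assms(4) by simp
  define I :: "(real \<Rightarrow> real) \<Rightarrow> real" where "I d = (LINT x:{-1..1}|lborel. (d x)\<^sup>2)" for d
  have I0: "I d \<ge> 0" for d unfolding I_def by (rule sq_int_nonneg)
  define T where "T = {grav * rho * (\<psi> 0)\<^sup>2 / (LINT x:{-1..1}|lborel. (d x)\<^sup>2) | \<psi> d.
        h01 \<psi> d \<and> nonzero_on \<psi>}"
  have Bc: "Bc grav rho = sqrt (Sup T)" unfolding Bc_def T_def ..
  define S where "S = {b\<^sup>2 * (LINT x:{-1..1}|lborel. (d2 x)\<^sup>2) /
        (grav * rho * (\<psi> 0)\<^sup>2 - b\<^sup>2 * (LINT x:{-1..1}|lborel. (d1 x)\<^sup>2)) | \<psi> d1 d2.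
        h02 \<psi> d1 d2 \<and> grav * rho * (\<psi> 0)\<^sup>2 - b\<^sup>2 * (LINT x:{-1..1}|lborel. (d1 x)\<^sup>2) > 0}"
  have Xi: "xi_vc grav rho b = sqrt (Inf S)" unfolding xi_vc_def S_def ..
  have T_le: "t \<le> gr / 2" if "t \<in> T" for t
  proof -
    from that obtain \<psi> d where t: "t = gr * (\<psi> 0)\<^sup>2 / I d" and h: "h01 \<psi> d"
      unfolding T_def I_def gr_def by auto
    have hb: "2 * (\<psi> 0)\<^sup>2 \<le> I d" using h01_bound[OF h] unfolding I_def .
    show ?thesis
    proof (cases "I d = 0")
      case True then show ?thesis using t gr0 by simp
    next
      case False
      hence "I d > 0" using I0[of d] by simp
      moreover have "gr * (\<psi> 0)\<^sup>2 \<le> gr / 2 * I d" using hb gr0 by simp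
      ultimately show ?thesis using t by (simp add: divide_le_eq)
    qed
  qed
  have bddT: "bdd_above T" using T_le by (intro bdd_aboveI[of _ "gr / 2"]) auto
  have T_mem: "gr * (\<psi> 0)\<^sup>2 / I d \<in> T" if "h01 \<psi> d" "\<psi> 0 \<noteq> 0" for \<psi> d
    unfolding T_def I_def gr_def nonzero_on_def using that by force
  have S_mem: "b\<^sup>2 * I d2 / (gr * (\<psi> 0)\<^sup>2 - b\<^sup>2 * I d1) \<in> S"
    if "h02 \<psi> d1 d2" "gr * (\<psi> 0)\<^sup>2 - b\<^sup>2 * I d1 > 0" for \<psi> d1 d2
    unfolding S_def I_def gr_def using that unfolding I_def gr_def by force
  have S_ge: "s \<ge> 0" if "s \<in> S" for s
    using that unfolding S_def by (auto intro!: divide_nonneg_pos mult_nonneg_nonneg sq_int_nonneg)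
  have bddS: "bdd_below S" using S_ge by (intro bdd_belowI[of _ 0]) auto
  have E0e: "2 * E0 grav rho b \<xi> \<psi> d1 d2 = b\<^sup>2 * I d1 + b\<^sup>2 * I d2 / \<xi>\<^sup>2 - gr * (\<psi> 0)\<^sup>2"
    if "h02 \<psi> d1 d2" for \<psi> d1 d2
    using E0_eq[OF that, where g=grav and r=rho and b=b and \<xi>=\<xi>] unfolding I_def gr_def
    by (simp add: algebra_simps)
  have hb02: "2 * (\<psi> 0)\<^sup>2 \<le> I d1" if "h02 \<psi> d1 d2" for \<psi> d1 d2
    using h01_bound[of \<psi> d1] that unfolding h02_def I_def by auto
  obtain \<psi>f d1f d2f where hf: "h02 \<psi>f d1f d2f" "\<psi>f 0 \<noteq> 0"
    using family[of 0] by auto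
  have Tne: "T \<noteq> {}" using T_mem[of \<psi>f d1f] hf unfolding h02_def by auto
  have SupT0: "Sup T \<ge> 0"
  proof -
    have tm: "gr * (\<psi>f 0)\<^sup>2 / I d1f \<in> T" using T_mem[of \<psi>f d1f] hf unfolding h02_def by auto
    have "0 \<le> gr * (\<psi>f 0)\<^sup>2 / I d1f" using gr0 I0[of d1f] by simp
    also have "\<dots> \<le> Sup T" using tm bddT by (rule cSup_upper)
    finally show ?thesis .
  qed
  have SupT: "Sup T \<le> gr / 2" using Tne T_le by (intro cSup_least) auto
  have bBc: "b\<^sup>2 < Sup T" if "b < Bc grav rho"
  proof -
    have "0 < sqrt (Sup T)" using that b0 Bc by linarith
    hence "Sup T > 0" by simp
    have "b\<^sup>2 < (sqrt (Sup T))\<^sup>2" using that b0 Bc by (intro power_strict_mono) auto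
    with \<open>Sup T > 0\<close> show ?thesis by simp
  qed
  have part4: "b < Bc grav rho \<and> \<bar>\<xi>\<bar> > xi_vc grav rho b \<and> \<psi> 0 \<noteq> 0"
    if h: "h02 \<psi> d1 d2" and neg: "E0 grav rho b \<xi> \<psi> d1 d2 < 0" for \<psi> d1 d2
  proof -
    define D where "D = gr * (\<psi> 0)\<^sup>2 - b\<^sup>2 * I d1"
    have lt: "b\<^sup>2 * I d2 / \<xi>\<^sup>2 < D" using neg E0e[OF h] unfolding D_def by linarith
    have nn: "0 \<le> b\<^sup>2 * I d2 / \<xi>\<^sup>2" using I0 by simp
    have D0: "D > 0" using lt nn by linarith
    have p0: "\<psi> 0 \<noteq> 0" using D0 I0[of d1] b0 unfolding D_def
      by (auto simp: not_less) (metis mult_nonneg_nonneg zero_le_power2 not_less)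
    have I1p: "I d1 > 0" using hb02[OF h] p0 by (smt (verit) zero_less_power2)
    have mem: "b\<^sup>2 * I d2 / D \<in> S" using S_mem[OF h] D0 unfolding D_def by simp
    have "b\<^sup>2 * I d2 < \<xi>\<^sup>2 * D" using lt xi2 by (simp add: divide_less_eq mult.commute)
    hence rlt: "b\<^sup>2 * I d2 / D < \<xi>\<^sup>2" using D0 by (simp add: divide_less_eq)
    have "Inf S \<le> b\<^sup>2 * I d2 / D" using mem bddS by (rule cInf_lower)
    hence InfS: "Inf S < \<xi>\<^sup>2" using rlt by linarith
    have "sqrt (Inf S) < sqrt (\<xi>\<^sup>2)" using InfS by (rule real_sqrt_less_mono)
    hence x1: "\<bar>\<xi>\<bar> > xi_vc grav rho b" using Xi by simp
    have tm: "gr * (\<psi> 0)\<^sup>2 / I d1 \<in> T" using T_mem[of \<psi> d1] h p0 unfolding h02_def by auto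
    have "b\<^sup>2 * I d1 < gr * (\<psi> 0)\<^sup>2" using D0 unfolding D_def by simp
    hence "b\<^sup>2 < gr * (\<psi> 0)\<^sup>2 / I d1" using I1p by (simp add: less_divide_eq)
    also have "\<dots> \<le> Sup T" using tm bddT by (rule cSup_upper)
    finally have "b\<^sup>2 < Sup T" .
    hence "sqrt (b\<^sup>2) < sqrt (Sup T)" by (rule real_sqrt_less_mono)
    hence "b < Bc grav rho" using Bc b0 by simp
    with x1 p0 show ?thesis by simp
  qed
  have part1: "E0 grav rho b \<xi> \<psi> d1 d2 \<ge> 0 \<and>
           E0 grav rho b \<xi> \<psi> d1 d2 \<ge>
             1/2 * (LINT x:{-1..1}|lborel.
               (b\<^sup>2 - (Bc grav rho)\<^sup>2) * (d1 x)\<^sup>2 + b\<^sup>2 * (d2 x)\<^sup>2 / \<xi>\<^sup>2)"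
    if ge: "b \<ge> Bc grav rho" and h: "h02 \<psi> d1 d2" for \<psi> d1 d2
  proof -
    let ?c = "(Bc grav rho)\<^sup>2"
    have key: "gr * (\<psi> 0)\<^sup>2 \<le> ?c * I d1"
    proof (cases "\<psi> 0 = 0")
      case True then show ?thesis using I0[of d1] by simp
    next
      case False
      have I1p: "I d1 > 0" using hb02[OF h] False by (smt (verit) zero_less_power2)
      have tm: "gr * (\<psi> 0)\<^sup>2 / I d1 \<in> T" using T_mem[of \<psi> d1] h False unfolding h02_def by auto
      have le: "gr * (\<psi> 0)\<^sup>2 / I d1 \<le> Sup T" using tm bddT by (rule cSup_upper)
      have "0 \<le> gr * (\<psi> 0)\<^sup>2 / I d1" using gr0 I1p by simp
      hence "Sup T \<ge> 0" using le by linarith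
      hence c: "?c = Sup T" using Bc by simp
      show ?thesis using le I1p unfolding c by (simp add: divide_le_eq)
    qed
    have Bc0: "Bc grav rho \<ge> 0 \<or> Bc grav rho < 0" by auto
    have cb: "?c \<le> b\<^sup>2"
    proof -
      have "Bc grav rho \<ge> 0" using Bc SupT0 by simp
      then show ?thesis using ge by (intro power_mono) auto
    qed
    have R: "(LINT x:{-1..1}|lborel. (b\<^sup>2 - ?c) * (d1 x)\<^sup>2 + b\<^sup>2 * (d2 x)\<^sup>2 / \<xi>\<^sup>2)
       = (b\<^sup>2 - ?c) * I d1 + b\<^sup>2 * I d2 / \<xi>\<^sup>2"
      using rhs_eq[OF h] unfolding I_def .
    have ring: "(b\<^sup>2 - ?c) * I d1 = b\<^sup>2 * I d1 - ?c * I d1" by (simp add: algebra_simps)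
    define X where "X = (b\<^sup>2 - ?c) * I d1 + b\<^sup>2 * I d2 / \<xi>\<^sup>2"
    have E2: "X \<le> 2 * E0 grav rho b \<xi> \<psi> d1 d2"
      using E0e[OF h] key ring unfolding X_def by linarith
    have nn: "0 \<le> X" unfolding X_def
      using cb I0[of d1] I0[of d2] by simp
    have "1/2 * X \<le> E0 grav rho b \<xi> \<psi> d1 d2" using E2 by simp
    moreover have "0 \<le> E0 grav rho b \<xi> \<psi> d1 d2" using E2 nn by simp
    ultimately show ?thesis using R unfolding X_def by simp
  qed
  have part2: "E0 grav rho b \<xi> \<psi> d1 d2 \<ge> 0"
    if le: "\<bar>\<xi>\<bar> \<le> xi_vc grav rho b" and h: "h02 \<psi> d1 d2" for \<psi> d1 d2
  proof -
    define D where "D = gr * (\<psi> 0)\<^sup>2 - b\<^sup>2 * I d1"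
    have E: "2 * E0 grav rho b \<xi> \<psi> d1 d2 = b\<^sup>2 * I d2 / \<xi>\<^sup>2 - D"
      using E0e[OF h] unfolding D_def by linarith
    show ?thesis
    proof (cases "D > 0")
      case False
      have "0 \<le> b\<^sup>2 * I d2 / \<xi>\<^sup>2" using I0[of d2] by simp
      then show ?thesis using E False by linarith
    next
      case True
      have mem: "b\<^sup>2 * I d2 / D \<in> S" using S_mem[OF h] True unfolding D_def by simp
      have Sne: "S \<noteq> {}" using mem by auto
      have Inf0: "Inf S \<ge> 0" using Sne S_ge by (intro cInf_greatest) auto
      have "Inf S \<le> b\<^sup>2 * I d2 / D" using mem bddS by (rule cInf_lower)
      moreover have "\<xi>\<^sup>2 \<le> Inf S"
      proof -
        have "\<bar>\<xi>\<bar> \<le> sqrt (Inf S)" using le Xi by simp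
        hence "\<bar>\<xi>\<bar>\<^sup>2 \<le> (sqrt (Inf S))\<^sup>2" by (intro power_mono) auto
        then show ?thesis using Inf0 by simp
      qed
      ultimately have "\<xi>\<^sup>2 \<le> b\<^sup>2 * I d2 / D" by linarith
      hence "\<xi>\<^sup>2 * D \<le> b\<^sup>2 * I d2" using True by (simp add: le_divide_eq)
      hence "D \<le> b\<^sup>2 * I d2 / \<xi>\<^sup>2" using xi2 by (simp add: le_divide_eq mult.commute)
      then show ?thesis using E by simp
    qed
  qed
  have part3: "\<exists>\<psi> d1 d2. h02 \<psi> d1 d2 \<and> E0 grav rho b \<xi> \<psi> d1 d2 < 0"
    if lt: "b < Bc grav rho" and gt: "\<bar>\<xi>\<bar> > xi_vc grav rho b"
  proof -
    have "b\<^sup>2 < gr / 2" using bBc[OF lt] SupT by linarith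
    hence "b\<^sup>2 / gr < 1/2" using gr0 by (simp add: divide_less_eq)
    then obtain \<psi> d1 d2 where h: "h02 \<psi> d1 d2" and q: "b\<^sup>2 / gr * I d1 < (\<psi> 0)\<^sup>2"
      using family[of "b\<^sup>2 / gr"] unfolding I_def by auto
    have "gr * (b\<^sup>2 / gr * I d1) < gr * (\<psi> 0)\<^sup>2" using q gr0 by (intro mult_strict_left_mono)
    moreover have "gr * (b\<^sup>2 / gr * I d1) = b\<^sup>2 * I d1" using gr0 by simp
    ultimately have "b\<^sup>2 * I d1 < gr * (\<psi> 0)\<^sup>2" by simp
    hence mem: "b\<^sup>2 * I d2 / (gr * (\<psi> 0)\<^sup>2 - b\<^sup>2 * I d1) \<in> S" using S_mem[OF h] by simp
    have Sne: "S \<noteq> {}" using mem by auto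
    have Inf0: "Inf S \<ge> 0" using Sne S_ge by (intro cInf_greatest) auto
    have "sqrt (Inf S) < \<bar>\<xi>\<bar>" using gt Xi by simp
    hence "(sqrt (Inf S))\<^sup>2 < \<bar>\<xi>\<bar>\<^sup>2" using Inf0 by (intro power_strict_mono) auto
    hence "Inf S < \<xi>\<^sup>2" using Inf0 by simp
    then obtain s where "s \<in> S" "s < \<xi>\<^sup>2" using cInf_lessD[OF Sne] by blast
    then obtain \<psi>' d1' d2' where h': "h02 \<psi>' d1' d2'"
      and D0: "gr * (\<psi>' 0)\<^sup>2 - b\<^sup>2 * I d1' > 0"
      and slt: "b\<^sup>2 * I d2' / (gr * (\<psi>' 0)\<^sup>2 - b\<^sup>2 * I d1') < \<xi>\<^sup>2"
      unfolding S_def I_def gr_def by auto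
    have "b\<^sup>2 * I d2' < \<xi>\<^sup>2 * (gr * (\<psi>' 0)\<^sup>2 - b\<^sup>2 * I d1')"
      using slt D0 by (simp add: divide_less_eq)
    hence "b\<^sup>2 * I d2' / \<xi>\<^sup>2 < gr * (\<psi>' 0)\<^sup>2 - b\<^sup>2 * I d1'"
      using xi2 by (simp add: divide_less_eq mult.commute)
    hence "E0 grav rho b \<xi> \<psi>' d1' d2' < 0" using E0e[OF h'] by linarith
    with h' show ?thesis by blast
  qed
  show ?thesis
    unfolding b_def[symmetric]
    using part1 part2 part3 part4 by blast
qed

end
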